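(* Let $T$ be a rooted binary phylogenetic tree with root of out-degree 2 and leaf set $X$, $|X|\ge3$, under the $N_2$ model. Let $y,z$ be a cherry with parent $w$, $p_y,p_z$ the substitution probabilities of $(w,y),(w,z)$, $\theta=(1-p_y)(1-p_z)+p_yp_z$ and $\pi=p_yp_z/\theta$. Then $$RA_\varphi(T)=\theta\cdot RA_\varphi(T'_\pi)+(1-\theta)\cdot RA_\varphi(T'_{0.5}).$$
   Context: A rooted binary phylogenetic tree is a finite tree with a distinguished root vertex $\rho$, all edges directed away from $\rho$, in which $\rho$ has out-degree 2 (or 1), and every other vertex has in-degree 1 and out-degree 0 or 2; out-degree-0 vertices are leaves. Under the Neyman 2-state model $N_2$, each edge $e$ carries a substitution probability $p_e\in[0,\frac12]$; given the root state, states propagate independently along edges, each edge $(u,v)$ changing state with probability $p_e$; $f$ is the restriction of the states to the leaves. The coin-toss method $\varphi$: leaves get their states $f(x)$; proceeding towards the root, a vertex whose two children have equal states gets that state, otherwise one of the two states chosen by an independent fair coin toss; a vertex with a single child gets its child's state. $RA_\varphi(T)$ is the probability that the state assigned to the root equals the true root state. Vertices of in- and out-degree 1 may be suppressed (merging consecutive edges with substitution probabilities $a,b$ into one with probability $a+b-2ab$). For $q\in[0,\frac12]$, $T'_q$ is obtained from $T$ by deleting the leaves $y,z$ and their incident edges, attaching a new leaf $w'$ to $w$ via an edge with substitution probability $q$, and suppressing $w$; in particular $T'_{0.5}$ is $T'_q$ with $q=\frac12$. *)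

theory Defs
  imports "HOL-Probability.Probability_Mass_Function"
begin

text \<open>Every vertex stores the substitution probability of the edge entering it
  (the value stored at the root is unused). Leaves are unlabelled: the
  reconstruction accuracy does not depend on the labels.\<close>

datatype ptree = Leaf real | Node real ptree ptree

fun inc :: "ptree \<Rightarrow> real" where
  "inc (Leaf p) = p"
| "inc (Node p l r) = p"

fun nleaves :: "ptree \<Rightarrow> nat" where
  "nleaves (Leaf p) = 1"
| "nleaves (Node p l r) = nleaves l + nleaves r"

fun edges_ok :: "ptree \<Rightarrow> bool" where
  "edges_ok (Leaf p) = True"
| "edges_ok (Node p l r) =
     (0 \<le> inc l \<and> inc l \<le> 1/2 \<and> 0 \<le> inc r \<and> inc r \<le> 1/2 \<and> edges_ok l \<and> edges_ok r)"

text \<open>One-hole contexts, used to locate a cherry inside a tree.\<close>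
datatype ctx = Hole | CL real ctx ptree | CR real ptree ctx

fun plug :: "ctx \<Rightarrow> ptree \<Rightarrow> ptree" where
  "plug Hole t = t"
| "plug (CL p c r) t = Node p (plug c t) r"
| "plug (CR p l c) t = Node p l (plug c t)"

definition edge_pmf :: "real \<Rightarrow> bool \<Rightarrow> bool pmf" where
  "edge_pmf p s = map_pmf (\<lambda>c. if c then \<not> s else s) (bernoulli_pmf p)"

text \<open>N2 model: distribution of the leaf states (listed left to right) of t,
  given the true state at the root of t.\<close>
fun evolve :: "ptree \<Rightarrow> bool \<Rightarrow> bool list pmf" where
  "evolve (Leaf p) s = return_pmf [s]"
| "evolve (Node p l r) s =
     bind_pmf (edge_pmf (inc l) s) (\<lambda>sl.
     bind_pmf (evolve l sl) (\<lambda>fl.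
     bind_pmf (edge_pmf (inc r) s) (\<lambda>sr.
     bind_pmf (evolve r sr) (\<lambda>fr.
     return_pmf (fl @ fr)))))"

text \<open>Coin-toss method: distribution of the state assigned to the root of t
  from the leaf states xs (listed left to right).\<close>
fun coin_toss :: "ptree \<Rightarrow> bool list \<Rightarrow> bool pmf" where
  "coin_toss (Leaf p) xs = return_pmf (hd xs)"
| "coin_toss (Node p l r) xs =
     bind_pmf (coin_toss l (take (nleaves l) xs)) (\<lambda>a.
     bind_pmf (coin_toss r (drop (nleaves l) xs)) (\<lambda>b.
     (if a = b then return_pmf a else bernoulli_pmf (1/2))))"

text \<open>Reconstruction accuracy of the coin-toss method; the root state is
  True with probability r0.\<close>
definition RA :: "real \<Rightarrow> ptree \<Rightarrow> real" where
  "RA r0 T = measure_pmf.prob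
     (bind_pmf (bernoulli_pmf r0) (\<lambda>s.
      bind_pmf (evolve T s) (\<lambda>f.
      bind_pmf (coin_toss T f) (\<lambda>a. return_pmf (a = s))))) {True}"

text \<open>Merging two consecutive edges (suppressing a degree-2 vertex).\<close>
definition merge_prob :: "real \<Rightarrow> real \<Rightarrow> real" where
  "merge_prob a b = a + b - 2 * a * b"

text \<open>T'_q for the tree plug C (Node a (Leaf py) (Leaf pz)) with cherry
  (Leaf py, Leaf pz) and parent w (whose incoming edge has probability a):
  delete the cherry leaves, attach a new leaf w' via an edge of probability q,
  suppress w.\<close>
definition cherry_reduce :: "ctx \<Rightarrow> real \<Rightarrow> real \<Rightarrow> ptree" where
  "cherry_reduce C a q = plug C (Leaf (merge_prob a q))"

end

theory Submission
  imports Defs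
begin

lemma bool_pmf_bern: "bernoulli_pmf (pmf p True) = p"
proof (rule pmf_eqI)
  fix x :: bool
  have s: "pmf p True + pmf p False = 1"
    using sum_pmf_eq_1[of UNIV p] by (auto simp: UNIV_bool add.commute)
  show "pmf (bernoulli_pmf (pmf p True)) x = pmf p x"
    using s pmf_nonneg[of p True] pmf_nonneg[of p False] pmf_le_1[of p True]
    by (cases x) auto
qed

lemma bool_pmf_eqI: "pmf p True = pmf q True \<Longrightarrow> p = (q :: bool pmf)"
  by (metis bool_pmf_bern)

lemma pmf_bind_bern:
  "0 \<le> q \<Longrightarrow> q \<le> 1 \<Longrightarrow> pmf (bind_pmf (bernoulli_pmf q) f) x = pmf (f True) x * q + pmf (f False) x * (1 - q)"
  by (simp add: pmf_bind)

lemma edge_bern: "0 \<le> p \<Longrightarrow> p \<le> 1 \<Longrightarrow> edge_pmf p s = bernoulli_pmf (if s then 1 - p else p)"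
  apply (rule bool_pmf_eqI)
  apply (simp add: edge_pmf_def map_pmf_def pmf_bind_bern)
  done

definition comb :: "bool \<Rightarrow> bool \<Rightarrow> bool pmf" where
  "comb a b = (if a = b then return_pmf a else bernoulli_pmf (1/2))"

lemma pmf_comb_True: "pmf (comb a b) True = (if a = b then (if a then 1 else 0) else 1/2)"
  by (simp add: comb_def)

lemma cherry_w:
  assumes "0 \<le> py" "py \<le> 1/2" "0 \<le> pz" "pz \<le> 1/2"
    and th: "\<theta> = (1 - py) * (1 - pz) + py * pz" and pi: "\<pi> = py * pz / \<theta>"
  shows "bind_pmf (edge_pmf py w) (\<lambda>y. bind_pmf (edge_pmf pz w) (comb y))
       = bind_pmf (bernoulli_pmf \<theta>) (\<lambda>x. if x then edge_pmf \<pi> w else edge_pmf (1/2) w)"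
proof -
  have e1: "\<theta> = 1/2 + 2 * ((1/2 - py) * (1/2 - pz))" unfolding th by (simp add: algebra_simps)
  have e2: "\<theta> = 1 - (py * (1 - pz) + pz * (1 - py))" unfolding th by (simp add: algebra_simps)
  have tpos: "\<theta> \<ge> 1/2" using e1 mult_nonneg_nonneg[of "1/2 - py" "1/2 - pz"] assms(1-4) by linarith
  have t1: "\<theta> \<le> 1" using e2 mult_nonneg_nonneg[of py "1-pz"] mult_nonneg_nonneg[of pz "1-py"] assms(1-4) by linarith
  have p0: "0 \<le> \<pi>" unfolding pi using assms tpos by simp
  have p1: "\<pi> \<le> 1" unfolding pi using assms tpos th
    by (simp add: divide_le_eq_1 mult_nonneg_nonneg)
  show ?thesis
    apply (rule bool_pmf_eqI)
    using assms tpos t1 p0 p1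
    apply (cases w)
     apply (simp_all add: edge_bern pmf_bind_bern pmf_comb_True)
     apply (simp_all add: pi th field_simps)
    done
qed

lemma merge_edge:
  assumes "0 \<le> a" "a \<le> 1" "0 \<le> q" "q \<le> 1"
  shows "bind_pmf (edge_pmf a s) (edge_pmf q) = edge_pmf (merge_prob a q) s"
proof -
  have "merge_prob a q = a * (1-q) + q * (1-a)" unfolding merge_prob_def by (simp add: algebra_simps)
  hence "0 \<le> merge_prob a q" using assms mult_nonneg_nonneg[of a "1-q"] mult_nonneg_nonneg[of q "1-a"] by linarith
  moreover have "merge_prob a q = 1 - ((1-a) * (1-q) + q * a)" unfolding merge_prob_def by (simp add: algebra_simps)
  hence "merge_prob a q \<le> 1" using assms mult_nonneg_nonneg[of "1-a" "1-q"] mult_nonneg_nonneg[of q a] by linarith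
  ultimately show ?thesis
    apply (intro bool_pmf_eqI)
    using assms apply (cases s)
     apply (simp_all add: edge_bern pmf_bind_bern merge_prob_def algebra_simps)
    done
qed

definition channel :: "ptree \<Rightarrow> bool \<Rightarrow> bool pmf" where
  "channel t s = bind_pmf (evolve t s) (coin_toss t)"

definition echan :: "ptree \<Rightarrow> bool \<Rightarrow> bool pmf" where
  "echan t s = bind_pmf (edge_pmf (inc t) s) (channel t)"

lemma evolve_len: "x \<in> set_pmf (evolve t s) \<Longrightarrow> length x = nleaves t"
  by (induction t arbitrary: s x) auto

lemma comm2:
  "bind_pmf A (\<lambda>x. bind_pmf (B x) (\<lambda>y. bind_pmf C (\<lambda>z. F x y z)))
   = bind_pmf C (\<lambda>z. bind_pmf A (\<lambda>x. bind_pmf (B x) (\<lambda>y. F x y z)))"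
proof -
  have "\<And>x. bind_pmf (B x) (\<lambda>y. bind_pmf C (\<lambda>z. F x y z)) = bind_pmf C (\<lambda>z. bind_pmf (B x) (\<lambda>y. F x y z))"
    by (rule bind_commute_pmf)
  hence "bind_pmf A (\<lambda>x. bind_pmf (B x) (\<lambda>y. bind_pmf C (\<lambda>z. F x y z)))
     = bind_pmf A (\<lambda>x. bind_pmf C (\<lambda>z. bind_pmf (B x) (\<lambda>y. F x y z)))" by simp
  also have "\<dots> = bind_pmf C (\<lambda>z. bind_pmf A (\<lambda>x. bind_pmf (B x) (\<lambda>y. F x y z)))"
    by (rule bind_commute_pmf)
  finally show ?thesis .
qed

lemma channel_Leaf: "channel (Leaf p) s = return_pmf s"
  by (simp add: channel_def bind_return_pmf)

lemma echan_Leaf: "echan (Leaf p) s = edge_pmf p s"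
proof -
  have "channel (Leaf p) = return_pmf" by (rule ext) (simp add: channel_Leaf)
  thus ?thesis by (simp add: echan_def bind_return_pmf')
qed

lemma comb_eta: "comb a = (\<lambda>b. if a = b then return_pmf a else bernoulli_pmf (1/2))"
  by (rule ext) (simp add: comb_def)

lemma channel_Node:
  "channel (Node p l r) s = bind_pmf (echan l s) (\<lambda>a. bind_pmf (echan r s) (comb a))"
proof -
  let ?El = "edge_pmf (inc l) s" and ?Er = "edge_pmf (inc r) s"
  have "channel (Node p l r) s = bind_pmf ?El (\<lambda>sl. bind_pmf (evolve l sl) (\<lambda>fl.
     bind_pmf ?Er (\<lambda>sr. bind_pmf (evolve r sr) (\<lambda>fr. coin_toss (Node p l r) (fl @ fr)))))"
    by (simp add: channel_def bind_assoc_pmf bind_return_pmf)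
  also have "\<dots> = bind_pmf ?El (\<lambda>sl. bind_pmf (evolve l sl) (\<lambda>fl.
     bind_pmf ?Er (\<lambda>sr. bind_pmf (evolve r sr) (\<lambda>fr. bind_pmf (coin_toss l fl) (\<lambda>a. bind_pmf (coin_toss r fr) (comb a))))))"
    by (intro bind_pmf_cong refl) (simp add: evolve_len comb_eta)
  also have "\<dots> = bind_pmf ?El (\<lambda>sl. bind_pmf (evolve l sl) (\<lambda>fl.
     bind_pmf (coin_toss l fl) (\<lambda>a. bind_pmf ?Er (\<lambda>sr. bind_pmf (evolve r sr) (\<lambda>fr. bind_pmf (coin_toss r fr) (comb a))))))"
    by (subst comm2) simp
  also have "\<dots> = bind_pmf (echan l s) (\<lambda>a. bind_pmf (echan r s) (comb a))"
    by (simp add: echan_def channel_def bind_assoc_pmf)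
  finally show ?thesis .
qed

lemma echan_Node:
  "echan (Node p l r) s = bind_pmf (edge_pmf p s) (\<lambda>s'. bind_pmf (echan l s') (\<lambda>a. bind_pmf (echan r s') (comb a)))"
proof -
  have "channel (Node p l r) = (\<lambda>s. bind_pmf (echan l s) (\<lambda>a. bind_pmf (echan r s) (comb a)))"
    by (rule ext) (rule channel_Node)
  thus ?thesis by (simp add: echan_def)
qed

fun ech :: "ctx \<Rightarrow> (bool \<Rightarrow> bool pmf) \<Rightarrow> bool \<Rightarrow> bool pmf" where
  "ech Hole h = h"
| "ech (CL p c r) h = (\<lambda>s. bind_pmf (edge_pmf p s) (\<lambda>s'. bind_pmf (ech c h s') (\<lambda>a. bind_pmf (echan r s') (comb a))))"
| "ech (CR p l c) h = (\<lambda>s. bind_pmf (edge_pmf p s) (\<lambda>s'. bind_pmf (echan l s') (\<lambda>a. bind_pmf (ech c h s') (comb a))))"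

fun tch :: "ctx \<Rightarrow> (bool \<Rightarrow> bool pmf) \<Rightarrow> bool \<Rightarrow> bool pmf" where
  "tch Hole h = h"
| "tch (CL p c r) h = (\<lambda>s. bind_pmf (ech c h s) (\<lambda>a. bind_pmf (echan r s) (comb a)))"
| "tch (CR p l c) h = (\<lambda>s. bind_pmf (echan l s) (\<lambda>a. bind_pmf (ech c h s) (comb a)))"

lemma echan_plug: "echan (plug c t) = ech c (echan t)"
  by (induction c) (auto simp: echan_Node)

lemma channel_plug: "C \<noteq> Hole \<Longrightarrow> channel (plug C t) = tch C (echan t)"
  by (cases C) (auto simp: channel_Node echan_plug)

lemma ech_pull: "ech c (\<lambda>s. bind_pmf B (\<lambda>x. H x s)) s = bind_pmf B (\<lambda>x. ech c (H x) s)"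
proof (induction c arbitrary: s)
  case Hole
  then show ?case by simp
next
  case (CL p c r)
  have "ech (CL p c r) (\<lambda>s. bind_pmf B (\<lambda>x. H x s)) s
      = bind_pmf (edge_pmf p s) (\<lambda>s'. bind_pmf B (\<lambda>x. bind_pmf (ech c (H x) s') (\<lambda>a. bind_pmf (echan r s') (comb a))))"
    by (simp add: CL bind_assoc_pmf)
  also have "\<dots> = bind_pmf B (\<lambda>x. ech (CL p c r) (H x) s)"
    by (simp add: bind_commute_pmf[of "edge_pmf p s" B])
  finally show ?case .
next
  case (CR p l c)
  have "ech (CR p l c) (\<lambda>s. bind_pmf B (\<lambda>x. H x s)) s
      = bind_pmf (edge_pmf p s) (\<lambda>s'. bind_pmf (echan l s') (\<lambda>a. bind_pmf B (\<lambda>x. bind_pmf (ech c (H x) s') (comb a))))"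
    by (simp add: CR bind_assoc_pmf)
  also have "\<dots> = bind_pmf B (\<lambda>x. ech (CR p l c) (H x) s)"
    by (subst comm2) simp
  finally show ?case .
qed

lemma tch_pull: "tch c (\<lambda>s. bind_pmf B (\<lambda>x. H x s)) s = bind_pmf B (\<lambda>x. tch c (H x) s)"
proof (cases c)
  case Hole
  then show ?thesis by simp
next
  case (CL p c r)
  then show ?thesis by (simp add: ech_pull bind_assoc_pmf)
next
  case (CR p l c)
  then show ?thesis by (simp add: ech_pull bind_assoc_pmf bind_commute_pmf[of "echan l s" B])
qed


lemma edges_plug: "edges_ok (plug C t) \<Longrightarrow> edges_ok t"
  by (induction C) auto

lemma edges_plug_inc: "edges_ok (plug C t) \<Longrightarrow> C \<noteq> Hole \<Longrightarrow> 0 \<le> inc t \<and> inc t \<le> 1/2"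
proof (induction C)
  case Hole
  then show ?case by simp
next
  case (CL p c r)
  then show ?case by (cases "c = Hole") auto
next
  case (CR p l c)
  then show ?case by (cases "c = Hole") auto
qed

lemma RA_channel: "RA r0 T = pmf (bind_pmf (bernoulli_pmf r0) (\<lambda>s. bind_pmf (channel T s) (\<lambda>a. return_pmf (a = s)))) True"
  by (simp add: RA_def channel_def bind_assoc_pmf measure_pmf_single)

theorem theorem4:
  fixes T :: ptree and C :: ctx and a py pz r0 \<theta> \<pi> :: real
  assumes "T = plug C (Node a (Leaf py) (Leaf pz))"
    and "edges_ok T"
    and "nleaves T \<ge> 3"
    and "0 \<le> r0" and "r0 \<le> 1"
    and "\<theta> = (1 - py) * (1 - pz) + py * pz"
    and "\<pi> = py * pz / \<theta>"
  shows "RA r0 T = \<theta> * RA r0 (cherry_reduce C a \<pi>) + (1 - \<theta>) * RA r0 (cherry_reduce C a (1/2))"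
proof -
  define t where "t = Node a (Leaf py) (Leaf pz)"
  define t1 where "t1 = Leaf (merge_prob a \<pi>)"
  define t2 where "t2 = Leaf (merge_prob a (1/2))"
  have T: "T = plug C t" using assms(1) t_def by simp
  have CH: "C \<noteq> Hole" using assms(1,3) by auto
  have et: "edges_ok t" using edges_plug assms(2) T by blast
  hence b: "0 \<le> py" "py \<le> 1/2" "0 \<le> pz" "pz \<le> 1/2" by (auto simp: t_def)
  have ba: "0 \<le> a" "a \<le> 1/2" using edges_plug_inc[of C t] assms(2) T CH by (auto simp: t_def)
  have e1: "\<theta> = 1/2 + 2 * ((1/2 - py) * (1/2 - pz))" using assms(6) by (simp add: algebra_simps)
  have e2: "\<theta> = 1 - (py * (1 - pz) + pz * (1 - py))" using assms(6) by (simp add: algebra_simps)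
  have tpos: "\<theta> \<ge> 1/2" using e1 mult_nonneg_nonneg[of "1/2 - py" "1/2 - pz"] b by linarith
  have t1le: "\<theta> \<le> 1" using e2 mult_nonneg_nonneg[of py "1-pz"] mult_nonneg_nonneg[of pz "1-py"] b by linarith
  have p0: "0 \<le> \<pi>" using assms(7) b tpos by simp
  have p1: "\<pi> \<le> 1" using assms(7) b tpos assms(6)
    by (simp add: divide_le_eq_1 mult_nonneg_nonneg)
  have ech_t: "echan t = (\<lambda>s. bind_pmf (bernoulli_pmf \<theta>) (\<lambda>x. (if x then echan t1 else echan t2) s))"
  proof (rule ext)
    fix s
    have "echan t s = bind_pmf (edge_pmf a s) (\<lambda>w. bind_pmf (edge_pmf py w) (\<lambda>y. bind_pmf (edge_pmf pz w) (comb y)))"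
      by (simp add: t_def echan_Node echan_Leaf)
    also have "\<dots> = bind_pmf (edge_pmf a s) (\<lambda>w. bind_pmf (bernoulli_pmf \<theta>) (\<lambda>x. if x then edge_pmf \<pi> w else edge_pmf (1/2) w))"
      using cherry_w[OF b assms(6,7)] by simp
    also have "\<dots> = bind_pmf (bernoulli_pmf \<theta>) (\<lambda>x. bind_pmf (edge_pmf a s) (\<lambda>w. if x then edge_pmf \<pi> w else edge_pmf (1/2) w))"
      by (rule bind_commute_pmf)
    also have "\<dots> = bind_pmf (bernoulli_pmf \<theta>) (\<lambda>x. (if x then echan t1 else echan t2) s)"
    proof (intro bind_pmf_cong refl)
      fix x :: bool
      show "bind_pmf (edge_pmf a s) (\<lambda>w. if x then edge_pmf \<pi> w else edge_pmf (1/2) w) = (if x then echan t1 else echan t2) s"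
        using merge_edge[of a \<pi> s] merge_edge[of a "1/2" s] ba p0 p1
        by (cases x) (auto simp: t1_def t2_def echan_Leaf)
    qed
    finally show "echan t s = bind_pmf (bernoulli_pmf \<theta>) (\<lambda>x. (if x then echan t1 else echan t2) s)" .
  qed
  have ch: "channel T s = bind_pmf (bernoulli_pmf \<theta>) (\<lambda>x. if x then channel (plug C t1) s else channel (plug C t2) s)" for s
  proof -
    have "channel T s = tch C (\<lambda>s. bind_pmf (bernoulli_pmf \<theta>) (\<lambda>x. (if x then echan t1 else echan t2) s)) s"
      using T CH channel_plug ech_t by simp
    also have "\<dots> = bind_pmf (bernoulli_pmf \<theta>) (\<lambda>x. tch C (if x then echan t1 else echan t2) s)"
      by (rule tch_pull)
    also have "\<dots> = bind_pmf (bernoulli_pmf \<theta>) (\<lambda>x. if x then channel (plug C t1) s else channel (plug C t2) s)"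
      by (intro bind_pmf_cong refl) (auto simp: channel_plug[OF CH])
    finally show ?thesis .
  qed
  define P where "P = (\<lambda>T'. bind_pmf (bernoulli_pmf r0) (\<lambda>s. bind_pmf (channel T' s) (\<lambda>a. return_pmf (a = s))))"
  have "P T = bind_pmf (bernoulli_pmf r0) (\<lambda>s. bind_pmf (bernoulli_pmf \<theta>) (\<lambda>x. bind_pmf (if x then channel (plug C t1) s else channel (plug C t2) s) (\<lambda>a. return_pmf (a = s))))"
    by (simp add: P_def ch bind_assoc_pmf)
  also have "\<dots> = bind_pmf (bernoulli_pmf \<theta>) (\<lambda>x. bind_pmf (bernoulli_pmf r0) (\<lambda>s. bind_pmf (if x then channel (plug C t1) s else channel (plug C t2) s) (\<lambda>a. return_pmf (a = s))))"
    by (rule bind_commute_pmf)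
  also have "\<dots> = bind_pmf (bernoulli_pmf \<theta>) (\<lambda>x. if x then P (plug C t1) else P (plug C t2))"
    by (intro bind_pmf_cong refl) (auto simp: P_def)
  finally have PT: "P T = bind_pmf (bernoulli_pmf \<theta>) (\<lambda>x. if x then P (plug C t1) else P (plug C t2))" .
  have "RA r0 T = pmf (P T) True" by (simp add: RA_channel P_def)
  also have "\<dots> = pmf (P (plug C t1)) True * \<theta> + pmf (P (plug C t2)) True * (1 - \<theta>)"
    using PT tpos t1le by (simp add: pmf_bind_bern)
  also have "\<dots> = \<theta> * RA r0 (cherry_reduce C a \<pi>) + (1 - \<theta>) * RA r0 (cherry_reduce C a (1/2))"
    by (simp add: RA_channel P_def cherry_reduce_def t1_def t2_def)
  finally show ?thesis .
qed

end
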